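(* Let $G$ be a Hausdorff topological group and $H$ an extremely amenable closed subgroup of $G$ of finite index. Then $H$ is a normal clopen subgroup of $G$, and $M(G)$ is isomorphic (as a $G$-flow) to the action of $G$ on $G/H$ by left multiplication.
   Context: A $G$-flow is a continuous action of $G$ on a compact Hausdorff space; $M(G)$ denotes the universal minimal $G$-flow (the minimal $G$-flow admitting a continuous $G$-equivariant map onto every minimal $G$-flow, unique up to isomorphism). A topological group $H$ is extremely amenable if every $H$-flow has a fixed point (equivalently $|M(H)|=1$). *)

theory Defs
  imports "HOL-Analysis.Analysis" "HOL-Algebra.Coset"
begin

definition topological_group :: "'g monoid \<Rightarrow> 'g topology \<Rightarrow> bool" where
  "topological_group G T \<longleftrightarrow>
     group G \<and> topspace T = carrier G \<and>
     continuous_map (prod_topology T T) T (\<lambda>(x,y). x \<otimes>\<^bsub>G\<^esub> y) \<and>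
     continuous_map T T (\<lambda>x. inv\<^bsub>G\<^esub> x)"

text \<open>A G-flow: a continuous action act of G on a (nonempty) compact Hausdorff space X.
  Only the values of act on carrier G and topspace X matter.\<close>
definition flow :: "'g monoid \<Rightarrow> 'g topology \<Rightarrow> 'x topology \<Rightarrow> ('g \<Rightarrow> 'x \<Rightarrow> 'x) \<Rightarrow> bool" where
  "flow G T X act \<longleftrightarrow>
     topspace X \<noteq> {} \<and> compact_space X \<and> Hausdorff_space X \<and>
     (\<forall>g\<in>carrier G. \<forall>x\<in>topspace X. act g x \<in> topspace X) \<and>
     (\<forall>x\<in>topspace X. act \<one>\<^bsub>G\<^esub> x = x) \<and>
     (\<forall>g\<in>carrier G. \<forall>h\<in>carrier G. \<forall>x\<in>topspace X.
         act (g \<otimes>\<^bsub>G\<^esub> h) x = act g (act h x)) \<and>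
     continuous_map (prod_topology T X) X (\<lambda>(g,x). act g x)"

definition minimal_flow :: "'g monoid \<Rightarrow> 'g topology \<Rightarrow> 'x topology \<Rightarrow> ('g \<Rightarrow> 'x \<Rightarrow> 'x) \<Rightarrow> bool" where
  "minimal_flow G T X act \<longleftrightarrow>
     flow G T X act \<and>
     (\<forall>Y. closedin X Y \<and> Y \<noteq> {} \<and> (\<forall>g\<in>carrier G. \<forall>y\<in>Y. act g y \<in> Y)
          \<longrightarrow> Y = topspace X)"

definition flow_epi ::
  "'g monoid \<Rightarrow> 'x topology \<Rightarrow> ('g \<Rightarrow> 'x \<Rightarrow> 'x) \<Rightarrow> 'y topology \<Rightarrow> ('g \<Rightarrow> 'y \<Rightarrow> 'y)
     \<Rightarrow> ('x \<Rightarrow> 'y) \<Rightarrow> bool" where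
  "flow_epi G X act Y act' f \<longleftrightarrow>
     continuous_map X Y f \<and> f ` topspace X = topspace Y \<and>
     (\<forall>g\<in>carrier G. \<forall>x\<in>topspace X. f (act g x) = act' g (f x))"

text \<open>X is a universal minimal G-flow (i.e. isomorphic to M(G)), with universality tested
  against minimal G-flows carried by the type 'y (given as the first argument).
  HOL cannot quantify over types inside a formula; in the theorem the type 'y is a
  free (hence arbitrary) type variable.\<close>
definition universal_minimal_flow ::
  "'y itself \<Rightarrow> 'g monoid \<Rightarrow> 'g topology \<Rightarrow> 'x topology \<Rightarrow> ('g \<Rightarrow> 'x \<Rightarrow> 'x) \<Rightarrow> bool" where
  "universal_minimal_flow _ G T X act \<longleftrightarrow>
     minimal_flow G T X act \<and>
     (\<forall>(Y::'y topology) act'. minimal_flow G T Y act' \<longrightarrow> (\<exists>f. flow_epi G X act Y act' f))"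

text \<open>Tested on flows carried by the type 'z (first argument).\<close>
definition extremely_amenable ::
  "'z itself \<Rightarrow> 'g monoid \<Rightarrow> 'g topology \<Rightarrow> 'g set \<Rightarrow> bool" where
  "extremely_amenable _ G T H \<longleftrightarrow>
     (\<forall>(X::'z topology) act. flow (G\<lparr>carrier := H\<rparr>) (subtopology T H) X act \<longrightarrow>
        (\<exists>x\<in>topspace X. \<forall>h\<in>H. act h x = x))"

definition left_cosets :: "'g monoid \<Rightarrow> 'g set \<Rightarrow> 'g set set" where
  "left_cosets G H = (\<lambda>g. g <#\<^bsub>G\<^esub> H) ` carrier G"

definition quotient_topology :: "'a topology \<Rightarrow> ('a \<Rightarrow> 'b) \<Rightarrow> 'b set \<Rightarrow> 'b topology" where
  "quotient_topology T q S =
     topology (\<lambda>U. U \<subseteq> S \<and> openin T {x \<in> topspace T. q x \<in> U})"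

lemma istopology_quotient:
  "istopology (\<lambda>U. U \<subseteq> S \<and> openin T {x \<in> topspace T. q x \<in> U})"
proof -
  have "{x \<in> topspace T. q x \<in> U \<inter> V} = {x \<in> topspace T. q x \<in> U} \<inter> {x \<in> topspace T. q x \<in> V}"
    for U V by auto
  moreover have "{x \<in> topspace T. q x \<in> \<Union>K} = (\<Union>U\<in>K. {x \<in> topspace T. q x \<in> U})"
    for K by auto
  ultimately show ?thesis
    unfolding istopology_def by (auto intro!: openin_Union)
qed

lemma openin_quotient_topology:
  "openin (quotient_topology T q S) U \<longleftrightarrow> U \<subseteq> S \<and> openin T {x \<in> topspace T. q x \<in> U}"
  unfolding quotient_topology_def
  by (simp add: istopology_quotient[of S T q])

definition coset_space :: "'g monoid \<Rightarrow> 'g topology \<Rightarrow> 'g set \<Rightarrow> 'g set topology" where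
  "coset_space G T H = quotient_topology T (\<lambda>g. g <#\<^bsub>G\<^esub> H) (left_cosets G H)"

definition coset_action :: "'g monoid \<Rightarrow> 'g \<Rightarrow> 'g set \<Rightarrow> 'g set" where
  "coset_action G g C = g <#\<^bsub>G\<^esub> C"

end

theory Submission
  imports Defs
begin

no_notation (ASCII) subset_mset (infix \<open><#\<close> 50)

lemma mem_lcos:
  fixes G (structure)
  assumes "group G" "subgroup H G" "x \<in> carrier G" "a \<in> carrier G"
  shows "x \<in> a <#\<^bsub>G\<^esub> H \<longleftrightarrow> inv\<^bsub>G\<^esub> a \<otimes>\<^bsub>G\<^esub> x \<in> H"
proof -
  interpret group G by fact
  have Hc: "H \<subseteq> carrier G" using assms(2) subgroup.subset by blast
  show ?thesis
  proof
    assume "x \<in> a <# H"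
    then obtain h where h: "h \<in> H" "x = a \<otimes> h" unfolding l_coset_def by auto
    then have "inv a \<otimes> x = h" using Hc assms
      by (metis inv_solve_left' subsetD)
    then show "inv a \<otimes> x \<in> H" using h by simp
  next
    assume "inv a \<otimes> x \<in> H"
    moreover have "x = a \<otimes> (inv a \<otimes> x)" using assms
      by (simp add: m_assoc[symmetric])
    ultimately show "x \<in> a <# H" unfolding l_coset_def by blast
  qed
qed

lemma lcos_eq_iff:
  fixes G (structure)
  assumes "group G" "subgroup H G" "a \<in> carrier G" "b \<in> carrier G"
  shows "a <#\<^bsub>G\<^esub> H = b <#\<^bsub>G\<^esub> H \<longleftrightarrow> inv\<^bsub>G\<^esub> b \<otimes>\<^bsub>G\<^esub> a \<in> H"
proof -
  interpret group G by fact
  have Hc: "H \<subseteq> carrier G" using assms(2) subgroup.subset by blast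
  show ?thesis
  proof
    assume "a <# H = b <# H"
    moreover have "a \<in> a <# H" using mem_lcos[OF assms(1,2,3,3)] assms subgroup.one_closed by fastforce
    ultimately show "inv b \<otimes> a \<in> H" using mem_lcos assms by metis
  next
    assume ba: "inv b \<otimes> a \<in> H"
    have "x \<in> a <# H \<longleftrightarrow> x \<in> b <# H" for x
    proof (cases "x \<in> carrier G")
      case True
      have e: "inv b \<otimes> x = (inv b \<otimes> a) \<otimes> (inv a \<otimes> x)" using assms True
        by (simp add: m_assoc[symmetric]) (simp add: m_assoc)
      have e2: "inv a \<otimes> x = inv (inv b \<otimes> a) \<otimes> (inv b \<otimes> x)" using assms True
        by (simp add: inv_mult_group m_assoc[symmetric]) (simp add: m_assoc)
      show ?thesis
        using mem_lcos[OF assms(1,2) True assms(3)] mem_lcos[OF assms(1,2) True assms(4)]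
          e e2 ba assms(2) by (metis subgroup.m_closed subgroup.m_inv_closed)
    next
      case False
      then show ?thesis using l_coset_subset_G Hc assms by blast
    qed
    then show "a <# H = b <# H" by blast
  qed
qed


lemma tg_basic:
  assumes "topological_group G T"
  shows "group G" "topspace T = carrier G"
  using assms unfolding topological_group_def by auto

lemma lmult_cont:
  assumes "topological_group G T" "a \<in> carrier G"
  shows "continuous_map T T (\<lambda>x. a \<otimes>\<^bsub>G\<^esub> x)"
proof -
  have 1: "continuous_map T (prod_topology T T) (\<lambda>x. (a,x))"
    using assms by (simp add: continuous_map_paired topological_group_def)
  have 2: "continuous_map (prod_topology T T) T (\<lambda>(x,y). x \<otimes>\<^bsub>G\<^esub> y)"
    using assms topological_group_def by blast
  have "continuous_map T T ((\<lambda>(x,y). x \<otimes>\<^bsub>G\<^esub> y) \<circ> (\<lambda>x. (a,x)))"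
    by (rule continuous_map_compose[OF 1 2])
  then show ?thesis by (simp add: o_def)
qed

lemma rmult_cont:
  assumes "topological_group G T" "a \<in> carrier G"
  shows "continuous_map T T (\<lambda>x. x \<otimes>\<^bsub>G\<^esub> a)"
proof -
  have 1: "continuous_map T (prod_topology T T) (\<lambda>x. (x,a))"
    using assms by (simp add: continuous_map_paired topological_group_def)
  have 2: "continuous_map (prod_topology T T) T (\<lambda>(x,y). x \<otimes>\<^bsub>G\<^esub> y)"
    using assms topological_group_def by blast
  have "continuous_map T T ((\<lambda>(x,y). x \<otimes>\<^bsub>G\<^esub> y) \<circ> (\<lambda>x. (x,a)))"
    by (rule continuous_map_compose[OF 1 2])
  then show ?thesis by (simp add: o_def)
qed

lemma coset_preim:
  assumes "topological_group G T" "subgroup H G" "a \<in> carrier G"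
  shows "a <#\<^bsub>G\<^esub> H = {x \<in> topspace T. inv\<^bsub>G\<^esub> a \<otimes>\<^bsub>G\<^esub> x \<in> H}"
proof -
  have g: "group G" and t: "topspace T = carrier G" using tg_basic[OF assms(1)] by auto
  have "a <#\<^bsub>G\<^esub> H \<subseteq> carrier G"
    using group.l_coset_subset_G[OF g] assms subgroup.subset by blast
  then show ?thesis unfolding t using mem_lcos[OF g assms(2) _ assms(3)] by blast
qed

lemma coset_open:
  assumes "topological_group G T" "subgroup H G" "a \<in> carrier G" "openin T H"
  shows "openin T (a <#\<^bsub>G\<^esub> H)"
proof -
  have "inv\<^bsub>G\<^esub> a \<in> carrier G" using group.inv_closed[OF tg_basic(1)[OF assms(1)] assms(3)] .
  from openin_continuous_map_preimage[OF lmult_cont[OF assms(1) this] assms(4)]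
  show ?thesis unfolding coset_preim[OF assms(1-3)] .
qed

lemma coset_closed:
  assumes "topological_group G T" "subgroup H G" "a \<in> carrier G" "closedin T H"
  shows "closedin T (a <#\<^bsub>G\<^esub> H)"
proof -
  have "inv\<^bsub>G\<^esub> a \<in> carrier G" using group.inv_closed[OF tg_basic(1)[OF assms(1)] assms(3)] .
  from closedin_continuous_map_preimage[OF lmult_cont[OF assms(1) this] assms(4)]
  show ?thesis unfolding coset_preim[OF assms(1-3)] .
qed

lemma self_in_coset:
  assumes "group G" "subgroup H G" "a \<in> carrier G"
  shows "a \<in> a <#\<^bsub>G\<^esub> H"
  using mem_lcos[OF assms(1,2,3,3)] assms subgroup.one_closed group.l_inv by fastforce

lemma H_open:
  assumes tg: "topological_group G T" and sg: "subgroup H G" and cH: "closedin T H"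
    and fin: "finite (left_cosets G H)"
  shows "openin T H"
proof -
  have g: "group G" and t: "topspace T = carrier G" using tg_basic[OF tg] by auto
  interpret group G by (rule g)
  have Hc: "H \<subseteq> carrier G" using sg subgroup.subset by blast
  have oneH: "\<one>\<^bsub>G\<^esub> <#\<^bsub>G\<^esub> H = H" using group.lcos_mult_one[OF g Hc] .
  define R where "R = \<Union>{C \<in> left_cosets G H. C \<noteq> H}"
  have "closedin T R" unfolding R_def
    by (rule closedin_Union) (use fin coset_closed[OF tg sg _ cH] in \<open>auto simp: left_cosets_def\<close>)
  moreover have "R = topspace T - H"
  proof
    show "R \<subseteq> topspace T - H"
    proof
      fix x assume "x \<in> R"
      then obtain a where a: "a \<in> carrier G" "x \<in> a <#\<^bsub>G\<^esub> H" "a <#\<^bsub>G\<^esub> H \<noteq> H"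
        unfolding R_def left_cosets_def by auto
      have xc: "x \<in> carrier G" using a group.l_coset_subset_G[OF g Hc] by blast
      have "x \<notin> H"
      proof
        assume xH: "x \<in> H"
        have "inv\<^bsub>G\<^esub> a \<otimes>\<^bsub>G\<^esub> x \<in> H" using mem_lcos[OF g sg xc a(1)] a by blast
        then have "x \<otimes>\<^bsub>G\<^esub> inv\<^bsub>G\<^esub> (inv\<^bsub>G\<^esub> a \<otimes>\<^bsub>G\<^esub> x) \<in> H"
          using sg xH by (meson subgroup.m_closed subgroup.m_inv_closed)
        moreover have "x \<otimes>\<^bsub>G\<^esub> inv\<^bsub>G\<^esub> (inv\<^bsub>G\<^esub> a \<otimes>\<^bsub>G\<^esub> x) = a"
          using a(1) xc by (simp add: inv_mult_group m_assoc[symmetric])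
        ultimately have "a \<in> H" by simp
        then have "inv\<^bsub>G\<^esub> \<one>\<^bsub>G\<^esub> \<otimes>\<^bsub>G\<^esub> a \<in> H" using a(1) by simp
        then have "a <#\<^bsub>G\<^esub> H = \<one>\<^bsub>G\<^esub> <#\<^bsub>G\<^esub> H"
          using lcos_eq_iff[OF g sg a(1)] by simp
        then show False using a oneH by simp
      qed
      then show "x \<in> topspace T - H" using xc t by simp
    qed
  next
    show "topspace T - H \<subseteq> R"
    proof
      fix x assume x: "x \<in> topspace T - H"
      then have xc: "x \<in> carrier G" using t by simp
      have "x \<in> x <#\<^bsub>G\<^esub> H" using self_in_coset[OF g sg xc] .
      moreover have "x <#\<^bsub>G\<^esub> H \<noteq> H" using calculation x by auto
      ultimately show "x \<in> R" unfolding R_def left_cosets_def using xc by blast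
    qed
  qed
  ultimately have "closedin T (topspace T - H)" by simp
  moreover have "H = topspace T - (topspace T - H)" using Hc t by auto
  ultimately show ?thesis by (metis openin_diff openin_topspace)
qed


lemma lcos_assoc:
  assumes "group G" "subgroup H G" "g \<in> carrier G" "a \<in> carrier G"
  shows "g <#\<^bsub>G\<^esub> (a <#\<^bsub>G\<^esub> H) = (g \<otimes>\<^bsub>G\<^esub> a) <#\<^bsub>G\<^esub> H"
  using group.lcos_m_assoc[OF assms(1) subgroup.subset[OF assms(2)] assms(3,4)] .

lemma act_cont:
  assumes tg: "topological_group G T" and sg: "subgroup H G" and oH: "openin T H"
    and K: "K \<subseteq> carrier G" and S: "S \<subseteq> left_cosets G H"
    and inv: "\<forall>g\<in>K. \<forall>C\<in>S. g <#\<^bsub>G\<^esub> C \<in> S"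
  shows "continuous_map (prod_topology (subtopology T K) (discrete_topology S))
           (discrete_topology S) (\<lambda>(g,C). g <#\<^bsub>G\<^esub> C)"
  unfolding continuous_map_def
proof (intro conjI allI impI)
  have g: "group G" and t: "topspace T = carrier G" using tg_basic[OF tg] by auto
  interpret group G by (rule g)
  have tK: "topspace (subtopology T K) = K" using t K by auto
  show "(\<lambda>(g,C). g <#\<^bsub>G\<^esub> C) \<in> topspace (prod_topology (subtopology T K) (discrete_topology S))
           \<rightarrow> topspace (discrete_topology S)"
    using inv tK by auto
  fix U assume "openin (discrete_topology S) U"
  then have US: "U \<subseteq> S" by simp
  show "openin (prod_topology (subtopology T K) (discrete_topology S))
     {p \<in> topspace (prod_topology (subtopology T K) (discrete_topology S)). (\<lambda>(g,C). g <#\<^bsub>G\<^esub> C) p \<in> U}"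
    unfolding openin_prod_topology_alt
  proof (intro allI impI)
    fix g C
    assume "(g,C) \<in> {p \<in> topspace (prod_topology (subtopology T K) (discrete_topology S)). (\<lambda>(g,C). g <#\<^bsub>G\<^esub> C) p \<in> U}"
    then have gg: "g \<in> K" "C \<in> S" "g <#\<^bsub>G\<^esub> C \<in> U" using tK by auto
    obtain a where a: "a \<in> carrier G" "C = a <#\<^bsub>G\<^esub> H" using gg S unfolding left_cosets_def by auto
    have gc: "g \<in> carrier G" using gg K by auto
    have gac: "g \<otimes>\<^bsub>G\<^esub> a \<in> carrier G" using gc a by simp
    define W where "W = {x \<in> K. x \<otimes>\<^bsub>G\<^esub> a \<in> (g \<otimes>\<^bsub>G\<^esub> a) <#\<^bsub>G\<^esub> H}"
    have "openin T {x \<in> topspace T. x \<otimes>\<^bsub>G\<^esub> a \<in> (g \<otimes>\<^bsub>G\<^esub> a) <#\<^bsub>G\<^esub> H}"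
      by (rule openin_continuous_map_preimage[OF rmult_cont[OF tg a(1)] coset_open[OF tg sg gac oH]])
    moreover have "W = {x \<in> topspace T. x \<otimes>\<^bsub>G\<^esub> a \<in> (g \<otimes>\<^bsub>G\<^esub> a) <#\<^bsub>G\<^esub> H} \<inter> K"
      unfolding W_def using K t by auto
    ultimately have oW: "openin (subtopology T K) W" unfolding openin_subtopology by blast
    have gW: "g \<in> W" unfolding W_def using gg(1) self_in_coset[OF g sg gac] by simp
    have sub: "W \<times> {C} \<subseteq> {p \<in> topspace (prod_topology (subtopology T K) (discrete_topology S)). (\<lambda>(g,C). g <#\<^bsub>G\<^esub> C) p \<in> U}"
    proof
      fix p assume "p \<in> W \<times> {C}"
      then obtain x where p: "p = (x, C)" "x \<in> K" "x \<otimes>\<^bsub>G\<^esub> a \<in> (g \<otimes>\<^bsub>G\<^esub> a) <#\<^bsub>G\<^esub> H"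
        unfolding W_def by auto
      have xc: "x \<in> carrier G" using p K by auto
      have xac: "x \<otimes>\<^bsub>G\<^esub> a \<in> carrier G" using xc a by simp
      have "inv\<^bsub>G\<^esub> (g \<otimes>\<^bsub>G\<^esub> a) \<otimes>\<^bsub>G\<^esub> (x \<otimes>\<^bsub>G\<^esub> a) \<in> H"
        using mem_lcos[OF g sg xac gac] p by blast
      then have "(x \<otimes>\<^bsub>G\<^esub> a) <#\<^bsub>G\<^esub> H = (g \<otimes>\<^bsub>G\<^esub> a) <#\<^bsub>G\<^esub> H"
        using lcos_eq_iff[OF g sg xac gac] by blast
      then have "x <#\<^bsub>G\<^esub> C = g <#\<^bsub>G\<^esub> C"
        using a lcos_assoc[OF g sg xc a(1)] lcos_assoc[OF g sg gc a(1)] by simp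
      then show "p \<in> {p \<in> topspace (prod_topology (subtopology T K) (discrete_topology S)). (\<lambda>(g,C). g <#\<^bsub>G\<^esub> C) p \<in> U}"
        using p gg tK by auto
    qed
    show "\<exists>U' V. openin (subtopology T K) U' \<and> openin (discrete_topology S) V \<and>
                g \<in> U' \<and> C \<in> V \<and> U' \<times> V \<subseteq> {p \<in> topspace (prod_topology (subtopology T K) (discrete_topology S)). (\<lambda>(g,C). g <#\<^bsub>G\<^esub> C) p \<in> U}"
      by (rule exI[of _ W], rule exI[of _ "{C}"]) (use oW gW sub gg in auto)
  qed
qed

lemma coset_discrete:
  assumes tg: "topological_group G T" and sg: "subgroup H G" and oH: "openin T H"
  shows "coset_space G T H = discrete_topology (left_cosets G H)"
proof -
  have g: "group G" and t: "topspace T = carrier G" using tg_basic[OF tg] by auto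
  let ?X = "coset_space G T H"
  have "topspace ?X \<subseteq> left_cosets G H"
    using openin_topspace[of ?X] unfolding coset_space_def openin_quotient_topology by blast
  moreover have "openin ?X {C}" if CL: "C \<in> left_cosets G H" for C
  proof -
    obtain a where a: "a \<in> carrier G" "C = a <#\<^bsub>G\<^esub> H" using CL unfolding left_cosets_def by auto
    have "{x \<in> topspace T. x <#\<^bsub>G\<^esub> H \<in> {C}} = a <#\<^bsub>G\<^esub> H"
    proof -
      have "{x \<in> topspace T. x <#\<^bsub>G\<^esub> H \<in> {C}} = {x \<in> topspace T. inv\<^bsub>G\<^esub> a \<otimes>\<^bsub>G\<^esub> x \<in> H}"
        using lcos_eq_iff[OF g sg _ a(1)] a(2) t by auto
      then show ?thesis using coset_preim[OF tg sg a(1)] by simp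
    qed
    then show ?thesis unfolding coset_space_def openin_quotient_topology
      using coset_open[OF tg sg a(1) oH] CL by simp
  qed
  ultimately show ?thesis by (metis discrete_topology_unique_alt)
qed


theorem mainTheorem6:
  fixes G :: "'g monoid" and T :: "'g topology" and H :: "'g set"
  assumes "topological_group G T"
    and "Hausdorff_space T"
    and "subgroup H G"
    and "closedin T H"
    and "finite (left_cosets G H)"
    and "extremely_amenable TYPE('g set) G T H"
    and "extremely_amenable TYPE('y) G T H"
  shows "H \<lhd> G \<and> openin T H \<and> closedin T H \<and>
         universal_minimal_flow TYPE('y) G T (coset_space G T H) (coset_action G)"
proof -
  note tg = assms(1) and sg = assms(3) and fin = assms(5)
  have g: "group G" and t: "topspace T = carrier G" using tg_basic[OF tg] by auto
  interpret group G by (rule g)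
  have Hc: "H \<subseteq> carrier G" using sg subgroup.subset by blast
  have oH: "openin T H" using H_open[OF tg sg assms(4) fin] .
  define L where "L = left_cosets G H"
  have D: "coset_space G T H = discrete_topology L" unfolding L_def using coset_discrete[OF tg sg oH] .
  have cosL: "a <#\<^bsub>G\<^esub> H \<in> L" if "a \<in> carrier G" for a using that unfolding L_def left_cosets_def by blast
  have actL: "g <#\<^bsub>G\<^esub> C \<in> L" if gC: "g \<in> carrier G" "C \<in> L" for g C
  proof -
    obtain a where "a \<in> carrier G" "C = a <#\<^bsub>G\<^esub> H" using gC unfolding L_def left_cosets_def by auto
    then show ?thesis using lcos_assoc[OF g sg] gC cosL by simp
  qed
  have CG: "C \<subseteq> carrier G" if "C \<in> L" for C
    using that l_coset_subset_G[OF Hc] unfolding L_def left_cosets_def by blast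
  have finL: "finite L" using fin L_def by simp
  have norm: "\<forall>x\<in>carrier G. \<forall>h\<in>H. x \<otimes>\<^bsub>G\<^esub> h \<otimes>\<^bsub>G\<^esub> inv\<^bsub>G\<^esub> x \<in> H"
  proof (intro ballI)
    fix x h assume x: "x \<in> carrier G" and h: "h \<in> H"
    define b where "b = inv\<^bsub>G\<^esub> x"
    have bc: "b \<in> carrier G" using x b_def by simp
    define S where "S = (\<lambda>k. (k \<otimes>\<^bsub>G\<^esub> b) <#\<^bsub>G\<^esub> H) ` H"
    have SL: "S \<subseteq> L" unfolding S_def using cosL Hc bc by auto
    have Sinv: "\<forall>k\<in>H. \<forall>C\<in>S. k <#\<^bsub>G\<^esub> C \<in> S"
    proof (intro ballI)
      fix k C assume k: "k \<in> H" and C: "C \<in> S"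
      then obtain k' where k': "k' \<in> H" "C = (k' \<otimes>\<^bsub>G\<^esub> b) <#\<^bsub>G\<^esub> H" unfolding S_def by auto
      have "k <#\<^bsub>G\<^esub> C = ((k \<otimes>\<^bsub>G\<^esub> k') \<otimes>\<^bsub>G\<^esub> b) <#\<^bsub>G\<^esub> H"
      proof -
        have kc: "k \<in> carrier G" "k' \<in> carrier G" using k k' Hc by auto
        have "k <#\<^bsub>G\<^esub> C = (k \<otimes>\<^bsub>G\<^esub> (k' \<otimes>\<^bsub>G\<^esub> b)) <#\<^bsub>G\<^esub> H"
          using lcos_assoc[OF g sg kc(1), of "k' \<otimes>\<^bsub>G\<^esub> b"] k' kc bc by simp
        then show ?thesis using kc bc by (simp add: m_assoc)
      qed
      moreover have "k \<otimes>\<^bsub>G\<^esub> k' \<in> H" using subgroup.m_closed[OF sg k k'(1)] .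
      ultimately show "k <#\<^bsub>G\<^esub> C \<in> S" unfolding S_def
        by (intro image_eqI[where x="k \<otimes>\<^bsub>G\<^esub> k'"]) simp_all
    qed
    have fl: "flow (G\<lparr>carrier := H\<rparr>) (subtopology T H) (discrete_topology S) (coset_action G)"
      unfolding flow_def coset_action_def
    proof (intro conjI)
      show "topspace (discrete_topology S) \<noteq> {}" unfolding S_def using sg subgroup.one_closed by fastforce
      show "compact_space (discrete_topology S)" using finite_subset[OF SL finL] by (simp add: compact_space_discrete_topology)
      show "Hausdorff_space (discrete_topology S)" by simp
      show "\<forall>g\<in>carrier (G\<lparr>carrier := H\<rparr>). \<forall>x\<in>topspace (discrete_topology S). g <#\<^bsub>G\<^esub> x \<in> topspace (discrete_topology S)"
        using Sinv by simp
      show "\<forall>x\<in>topspace (discrete_topology S). \<one>\<^bsub>G\<lparr>carrier := H\<rparr>\<^esub> <#\<^bsub>G\<^esub> x = x"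
        using SL CG lcos_mult_one by auto
      show "\<forall>g\<in>carrier (G\<lparr>carrier := H\<rparr>). \<forall>h\<in>carrier (G\<lparr>carrier := H\<rparr>). \<forall>x\<in>topspace (discrete_topology S).
              (g \<otimes>\<^bsub>G\<lparr>carrier := H\<rparr>\<^esub> h) <#\<^bsub>G\<^esub> x = g <#\<^bsub>G\<^esub> (h <#\<^bsub>G\<^esub> x)"
      proof (intro ballI)
        fix g h x assume gh: "g \<in> carrier (G\<lparr>carrier := H\<rparr>)" "h \<in> carrier (G\<lparr>carrier := H\<rparr>)"
          and x: "x \<in> topspace (discrete_topology S)"
        have gc: "g \<in> carrier G" "h \<in> carrier G" using gh Hc by auto
        have xc: "x \<subseteq> carrier G" using x SL CG by auto
        show "(g \<otimes>\<^bsub>G\<lparr>carrier := H\<rparr>\<^esub> h) <#\<^bsub>G\<^esub> x = g <#\<^bsub>G\<^esub> (h <#\<^bsub>G\<^esub> x)"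
          using lcos_m_assoc[OF xc gc] by simp
      qed
      show "continuous_map (prod_topology (subtopology T H) (discrete_topology S)) (discrete_topology S)
              (\<lambda>(g, x). g <#\<^bsub>G\<^esub> x)"
        using act_cont[OF tg sg oH Hc _ Sinv] SL L_def by simp
    qed
    obtain C0 where C0: "C0 \<in> S" "\<forall>k\<in>H. coset_action G k C0 = C0"
      using assms(6) fl unfolding extremely_amenable_def by fastforce
    obtain k0 where k0: "k0 \<in> H" "C0 = (k0 \<otimes>\<^bsub>G\<^esub> b) <#\<^bsub>G\<^esub> H" using C0 unfolding S_def by auto
    have k0c: "k0 \<in> carrier G" using k0 Hc by auto
    have hc: "h \<in> carrier G" using h Hc by auto
    have ik0: "inv\<^bsub>G\<^esub> k0 \<in> H" using subgroup.m_inv_closed[OF sg k0(1)] .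
    have hik0: "h \<otimes>\<^bsub>G\<^esub> inv\<^bsub>G\<^esub> k0 \<in> H" using subgroup.m_closed[OF sg h ik0] .
    have "inv\<^bsub>G\<^esub> k0 <#\<^bsub>G\<^esub> C0 = (inv\<^bsub>G\<^esub> k0 \<otimes>\<^bsub>G\<^esub> (k0 \<otimes>\<^bsub>G\<^esub> b)) <#\<^bsub>G\<^esub> H"
      using k0 lcos_assoc[OF g sg] k0c bc by simp
    also have "inv\<^bsub>G\<^esub> k0 \<otimes>\<^bsub>G\<^esub> (k0 \<otimes>\<^bsub>G\<^esub> b) = b" using k0c bc by (simp add: m_assoc[symmetric])
    finally have e1: "b <#\<^bsub>G\<^esub> H = C0" using C0(2) ik0 unfolding coset_action_def by simp
    have "(h \<otimes>\<^bsub>G\<^esub> inv\<^bsub>G\<^esub> k0) <#\<^bsub>G\<^esub> C0 = ((h \<otimes>\<^bsub>G\<^esub> inv\<^bsub>G\<^esub> k0) \<otimes>\<^bsub>G\<^esub> (k0 \<otimes>\<^bsub>G\<^esub> b)) <#\<^bsub>G\<^esub> H"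
      using k0 lcos_assoc[OF g sg] k0c bc hc by simp
    also have "(h \<otimes>\<^bsub>G\<^esub> inv\<^bsub>G\<^esub> k0) \<otimes>\<^bsub>G\<^esub> (k0 \<otimes>\<^bsub>G\<^esub> b) = h \<otimes>\<^bsub>G\<^esub> b" using k0c bc hc by (simp add: m_assoc) (simp add: m_assoc[symmetric])
    finally have e2: "(h \<otimes>\<^bsub>G\<^esub> b) <#\<^bsub>G\<^esub> H = C0" using C0(2) hik0 unfolding coset_action_def by simp
    have "inv\<^bsub>G\<^esub> b \<otimes>\<^bsub>G\<^esub> (h \<otimes>\<^bsub>G\<^esub> b) \<in> H" using lcos_eq_iff[OF g sg _ bc, of "h \<otimes>\<^bsub>G\<^esub> b"] e1 e2 hc bc by simp
    then show "x \<otimes>\<^bsub>G\<^esub> h \<otimes>\<^bsub>G\<^esub> inv\<^bsub>G\<^esub> x \<in> H" using b_def x hc by (simp add: m_assoc)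
  qed
  have normal: "H \<lhd> G" using normal_inv_iff sg norm by blast
  have Linv: "\<forall>g\<in>carrier G. \<forall>C\<in>L. g <#\<^bsub>G\<^esub> C \<in> L" using actL by blast
  have flD: "flow G T (discrete_topology L) (coset_action G)"
    unfolding flow_def coset_action_def
  proof (intro conjI)
    show "topspace (discrete_topology L) \<noteq> {}" using cosL[of "\<one>\<^bsub>G\<^esub>"] by auto
    show "compact_space (discrete_topology L)" using finL by (simp add: compact_space_discrete_topology)
    show "Hausdorff_space (discrete_topology L)" by simp
    show "\<forall>g\<in>carrier G. \<forall>x\<in>topspace (discrete_topology L). g <#\<^bsub>G\<^esub> x \<in> topspace (discrete_topology L)"
      using Linv by simp
    show "\<forall>x\<in>topspace (discrete_topology L). \<one>\<^bsub>G\<^esub> <#\<^bsub>G\<^esub> x = x"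
      using CG lcos_mult_one by auto
    show "\<forall>g\<in>carrier G. \<forall>h\<in>carrier G. \<forall>x\<in>topspace (discrete_topology L). (g \<otimes>\<^bsub>G\<^esub> h) <#\<^bsub>G\<^esub> x = g <#\<^bsub>G\<^esub> (h <#\<^bsub>G\<^esub> x)"
    proof (intro ballI)
      fix g h x assume gc: "g \<in> carrier G" "h \<in> carrier G" and x: "x \<in> topspace (discrete_topology L)"
      have xc: "x \<subseteq> carrier G" using x CG by auto
      show "(g \<otimes>\<^bsub>G\<^esub> h) <#\<^bsub>G\<^esub> x = g <#\<^bsub>G\<^esub> (h <#\<^bsub>G\<^esub> x)"
        using lcos_m_assoc[OF xc gc] by simp
    qed
    have "continuous_map (prod_topology (subtopology T (carrier G)) (discrete_topology L)) (discrete_topology L)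
              (\<lambda>(g, x). g <#\<^bsub>G\<^esub> x)"
      using act_cont[OF tg sg oH _ _ Linv] L_def by simp
    then show "continuous_map (prod_topology T (discrete_topology L)) (discrete_topology L) (\<lambda>(g, x). g <#\<^bsub>G\<^esub> x)"
      using t by (metis subtopology_topspace)
  qed
  have minD: "minimal_flow G T (discrete_topology L) (coset_action G)"
    unfolding minimal_flow_def
  proof (intro conjI flD allI impI)
    fix Y assume Y: "closedin (discrete_topology L) Y \<and> Y \<noteq> {} \<and> (\<forall>g\<in>carrier G. \<forall>y\<in>Y. coset_action G g y \<in> Y)"
    then obtain C where C: "C \<in> Y" by blast
    have YL: "Y \<subseteq> L" using Y by simp
    obtain a where a: "a \<in> carrier G" "C = a <#\<^bsub>G\<^esub> H" using C YL unfolding L_def left_cosets_def by auto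
    have "L \<subseteq> Y"
    proof
      fix E assume "E \<in> L"
      then obtain e where e: "e \<in> carrier G" "E = e <#\<^bsub>G\<^esub> H" unfolding L_def left_cosets_def by auto
      have "(e \<otimes>\<^bsub>G\<^esub> inv\<^bsub>G\<^esub> a) <#\<^bsub>G\<^esub> C = ((e \<otimes>\<^bsub>G\<^esub> inv\<^bsub>G\<^esub> a) \<otimes>\<^bsub>G\<^esub> a) <#\<^bsub>G\<^esub> H" using lcos_assoc[OF g sg] a e by simp
      also have "(e \<otimes>\<^bsub>G\<^esub> inv\<^bsub>G\<^esub> a) \<otimes>\<^bsub>G\<^esub> a = e" using a e by (simp add: m_assoc)
      finally have "E = coset_action G (e \<otimes>\<^bsub>G\<^esub> inv\<^bsub>G\<^esub> a) C" using e unfolding coset_action_def by simp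
      then show "E \<in> Y" using Y C a e by simp
    qed
    then show "Y = topspace (discrete_topology L)" using YL by auto
  qed
  have univ: "\<exists>f. flow_epi G (discrete_topology L) (coset_action G) Y act' f"
    if mY: "minimal_flow G T Y act'" for Y :: "'y topology" and act'
  proof -
    have fY: "flow G T Y act'" using mY unfolding minimal_flow_def by blast
    have flH: "flow (G\<lparr>carrier := H\<rparr>) (subtopology T H) Y act'"
      unfolding flow_def
    proof (intro conjI)
      show "topspace Y \<noteq> {}" "compact_space Y" "Hausdorff_space Y" using fY unfolding flow_def by auto
      show "\<forall>g\<in>carrier (G\<lparr>carrier := H\<rparr>). \<forall>x\<in>topspace Y. act' g x \<in> topspace Y"
        using fY Hc unfolding flow_def by auto
      show "\<forall>x\<in>topspace Y. act' \<one>\<^bsub>G\<lparr>carrier := H\<rparr>\<^esub> x = x" using fY unfolding flow_def by simp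
      show "\<forall>g\<in>carrier (G\<lparr>carrier := H\<rparr>). \<forall>h\<in>carrier (G\<lparr>carrier := H\<rparr>). \<forall>x\<in>topspace Y.
              act' (g \<otimes>\<^bsub>G\<lparr>carrier := H\<rparr>\<^esub> h) x = act' g (act' h x)"
      proof (intro ballI)
        fix g h x assume gh: "g \<in> carrier (G\<lparr>carrier := H\<rparr>)" "h \<in> carrier (G\<lparr>carrier := H\<rparr>)"
          and x: "x \<in> topspace Y"
        have gc: "g \<in> carrier G" "h \<in> carrier G" using gh Hc by auto
        show "act' (g \<otimes>\<^bsub>G\<lparr>carrier := H\<rparr>\<^esub> h) x = act' g (act' h x)"
          using fY gc x unfolding flow_def by simp
      qed
      have "continuous_map (prod_topology T Y) Y (\<lambda>(g, x). act' g x)" using fY unfolding flow_def by blast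
      then show "continuous_map (prod_topology (subtopology T H) Y) Y (\<lambda>(g, x). act' g x)"
        unfolding prod_topology_subtopology(1) by (rule continuous_map_from_subtopology)
    qed
    obtain y0 where y0: "y0 \<in> topspace Y" "\<forall>h\<in>H. act' h y0 = y0"
    proof -
      have "flow (G\<lparr>carrier := H\<rparr>) (subtopology T H) Y act' \<longrightarrow> (\<exists>x\<in>topspace Y. \<forall>h\<in>H. act' h x = x)"
        using assms(7) unfolding extremely_amenable_def by blast
      then show ?thesis using flH that by blast
    qed
    have Yin: "act' g y \<in> topspace Y" if "g \<in> carrier G" "y \<in> topspace Y" for g y
      using fY that unfolding flow_def by blast
    have Ymul: "act' (g \<otimes>\<^bsub>G\<^esub> h) y = act' g (act' h y)" if "g \<in> carrier G" "h \<in> carrier G" "y \<in> topspace Y" for g h y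
      using fY that unfolding flow_def by blast
    define f where "f C = act' (SOME a. a \<in> carrier G \<and> C = a <#\<^bsub>G\<^esub> H) y0" for C
    have fval: "f (a <#\<^bsub>G\<^esub> H) = act' a y0" if a: "a \<in> carrier G" for a
    proof -
      define c where "c = (SOME c. c \<in> carrier G \<and> a <#\<^bsub>G\<^esub> H = c <#\<^bsub>G\<^esub> H)"
      have "c \<in> carrier G \<and> a <#\<^bsub>G\<^esub> H = c <#\<^bsub>G\<^esub> H" unfolding c_def by (rule someI[of _ a]) (use a in simp)
      then have c: "c \<in> carrier G" "a <#\<^bsub>G\<^esub> H = c <#\<^bsub>G\<^esub> H" by auto
      have ca: "inv\<^bsub>G\<^esub> c \<otimes>\<^bsub>G\<^esub> a \<in> H" using lcos_eq_iff[OF g sg a c(1)] c(2) by simp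
      have "act' a y0 = act' (c \<otimes>\<^bsub>G\<^esub> (inv\<^bsub>G\<^esub> c \<otimes>\<^bsub>G\<^esub> a)) y0" using a c by (simp add: m_assoc[symmetric])
      also have "\<dots> = act' c (act' (inv\<^bsub>G\<^esub> c \<otimes>\<^bsub>G\<^esub> a) y0)" using Ymul c a y0 by simp
      also have "\<dots> = act' c y0" using y0 ca by simp
      finally show ?thesis unfolding f_def c_def by simp
    qed
    define Orb where "Orb = (\<lambda>a. act' a y0) ` carrier G"
    have fL: "Orb = f ` L" unfolding Orb_def L_def left_cosets_def using fval by (auto simp: image_iff)
    have OY: "Orb = topspace Y"
    proof -
      have "Orb \<subseteq> topspace Y" unfolding Orb_def using Yin y0 by auto
      moreover have "finite Orb"
        using fL finL by simp
      moreover have "Hausdorff_space Y" using fY unfolding flow_def by blast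
      ultimately have "closedin Y Orb" using Hausdorff_imp_t1_space t1_space_closedin_finite by blast
      moreover have "Orb \<noteq> {}" unfolding Orb_def by auto
      moreover have "\<forall>g\<in>carrier G. \<forall>y\<in>Orb. act' g y \<in> Orb"
      proof (intro ballI)
        fix g y assume gc: "g \<in> carrier G" and y: "y \<in> Orb"
        then obtain a where a: "a \<in> carrier G" "y = act' a y0" unfolding Orb_def by auto
        have "act' g y = act' (g \<otimes>\<^bsub>G\<^esub> a) y0" using Ymul gc a y0 by simp
        moreover have "g \<otimes>\<^bsub>G\<^esub> a \<in> carrier G" using gc a by simp
        ultimately show "act' g y \<in> Orb" unfolding Orb_def by (intro image_eqI) simp_all
      qed
      ultimately show ?thesis using mY unfolding minimal_flow_def by blast
    qed
    have "flow_epi G (discrete_topology L) (coset_action G) Y act' f"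
      unfolding flow_epi_def
    proof (intro conjI)
      show "continuous_map (discrete_topology L) Y f"
        using fval Yin y0 unfolding L_def left_cosets_def by auto
      show "f ` topspace (discrete_topology L) = topspace Y"
        using OY fL by simp
      show "\<forall>g\<in>carrier G. \<forall>x\<in>topspace (discrete_topology L). f (coset_action G g x) = act' g (f x)"
      proof (intro ballI)
        fix g C assume gc: "g \<in> carrier G" and "C \<in> topspace (discrete_topology L)"
        then obtain a where a: "a \<in> carrier G" "C = a <#\<^bsub>G\<^esub> H" unfolding L_def left_cosets_def by auto
        have "f (coset_action G g C) = f ((g \<otimes>\<^bsub>G\<^esub> a) <#\<^bsub>G\<^esub> H)"
          using lcos_assoc[OF g sg gc a(1)] a unfolding coset_action_def by simp
        also have "\<dots> = act' (g \<otimes>\<^bsub>G\<^esub> a) y0" using fval gc a by simp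
        also have "\<dots> = act' g (f C)" using Ymul gc a y0 fval by simp
        finally show "f (coset_action G g C) = act' g (f C)" .
      qed
    qed
    then show ?thesis by blast
  qed
  show ?thesis
    using normal oH assms(4) minD univ D unfolding universal_minimal_flow_def by auto
qed

end
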